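(* Assume (A1) with constant $R$ and (A3) with constant $C_h$. Then for every $x\in\mathcal{C}$, if $\beta>\beta_1(x)$, the point $x-t\nabla g(x)$ belongs to $\mathcal{C}$ for all $t\in[0,t_1(x)]$, where $$t_1(x)=\min\!\left(\sqrt{\frac{R}{2C_h}}\frac{1}{\|\nabla g(x)\|},\ \frac{(2\beta\sigma_{\min}(\mathrm{D}h(x))^2-\sigma_1(\mathrm{D}h(x))C_\lambda(x))R}{2C_h\|\nabla g(x)\|^2},\ \frac{1}{2\beta\|\mathrm{D}h(x)\|_{\mathrm{op}}^2}\right).$$
   Context: Let $\mathcal{E}$ be a Euclidean space with inner product $\langle\cdot,\cdot\rangle$ and norm $\|\cdot\|$ (2-norm on $\mathbb{R}^m$), and $f\colon\mathcal{E}\to\mathbb{R}$, $h\colon\mathcal{E}\to\mathbb{R}^m$ be $C^\infty$. $\mathrm{D}h(x)$ is the differential, $\mathrm{D}h(x)^*$ its adjoint, $\sigma_1$ and $\sigma_{\min}=\sigma_m$ the largest and $m$-th singular values. $\mathcal{D}=\{x:\operatorname{rank}\mathrm{D}h(x)=m\}$; for $x\in\mathcal{D}$, $\lambda(x)=(\mathrm{D}h(x)^* )^\dagger[\nabla f(x)]$ (Moore–Penrose), smooth on $\mathcal{D}$. For $\beta\ge0$, Fletcher's augmented Lagrangian is $g(x)=f(x)-\langle h(x),\lambda(x)\rangle+\beta\|h(x)\|^2$. (A1): there are $R,\underline{\sigma}>0$ with $\sigma_{\min}(\mathrm{D}h(x))\ge\underline{\sigma}$ for all $x\in\mathcal{C}=\{x:\|h(x)\|\le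 R\}$. (A3): there is $C_h>0$ such that for all $x\in\mathcal{C}$, $v\in\mathcal{E}$: $h(x+v)=h(x)+\mathrm{D}h(x)[v]+E(x,v)$ with $\|E(x,v)\|\le C_h\|v\|^2$. For $x\in\mathcal{C}$: $C_\lambda(x)=\|\mathrm{D}\lambda(x)\|_{\mathrm{op}}$ and $\beta_1(x)=\sigma_1(\mathrm{D}h(x))C_\lambda(x)/(2\sigma_{\min}(\mathrm{D}h(x))^2)$. *)

theory Defs
  imports "HOL-Analysis.Analysis"
begin

text \<open>C-infinity: there is a family of iterated derivatives F k x [v1,...,vk] = D^k f(x)[v1,...,vk],
  with F 0 x [] = f x and each x |-> F k x vs Frechet differentiable with derivative
  v |-> F (k+1) x (v # vs).\<close>
definition smooth :: "('a::real_normed_vector \<Rightarrow> 'b::real_normed_vector) \<Rightarrow> bool" where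
  "smooth f \<longleftrightarrow> (\<exists>F :: nat \<Rightarrow> 'a \<Rightarrow> 'a list \<Rightarrow> 'b.
      (\<forall>x. F 0 x [] = f x) \<and>
      (\<forall>k x vs. length vs = k \<longrightarrow>
          ((\<lambda>y. F k y vs) has_derivative (\<lambda>v. F (Suc k) x (v # vs))) (at x)))"

definition Dmap :: "('a::real_normed_vector \<Rightarrow> 'b::real_normed_vector) \<Rightarrow> 'a \<Rightarrow> 'a \<Rightarrow> 'b" where
  "Dmap h x = frechet_derivative h (at x)"

definition grad :: "('a::real_inner \<Rightarrow> real) \<Rightarrow> 'a \<Rightarrow> 'a" where
  "grad f x = (SOME u. GDERIV f x :> u)"

definition sigma1 :: "('a::real_inner \<Rightarrow> real^'m::finite) \<Rightarrow> real" where
  "sigma1 A = onorm A"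

text \<open>m-th singular value of A : E -> R^m, i.e. sqrt of the smallest eigenvalue of A A^*,
  written as min over unit y in R^m of norm (A^* y).\<close>
definition sigma_min :: "('a::real_inner \<Rightarrow> real^'m::finite) \<Rightarrow> real" where
  "sigma_min A = Inf {norm (adjoint A y) | y. norm y = 1}"

definition mp_pinv :: "('a::real_inner \<Rightarrow> 'b::real_inner) \<Rightarrow> 'b \<Rightarrow> 'a" where
  "mp_pinv A = (THE B. linear B \<and> A \<circ> B \<circ> A = A \<and> B \<circ> A \<circ> B = B \<and>
       adjoint (A \<circ> B) = A \<circ> B \<and> adjoint (B \<circ> A) = B \<circ> A)"

definition flambda :: "('a::euclidean_space \<Rightarrow> real) \<Rightarrow> ('a \<Rightarrow> real^'m::finite) \<Rightarrow> 'a \<Rightarrow> real^'m" where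
  "flambda f h x = mp_pinv (adjoint (Dmap h x)) (grad f x)"

definition fletcher :: "('a::euclidean_space \<Rightarrow> real) \<Rightarrow> ('a \<Rightarrow> real^'m::finite) \<Rightarrow> real \<Rightarrow> 'a \<Rightarrow> real" where
  "fletcher f h \<beta> x = f x - inner (h x) (flambda f h x) + \<beta> * (norm (h x))\<^sup>2"

definition C_lambda :: "('a::euclidean_space \<Rightarrow> real) \<Rightarrow> ('a \<Rightarrow> real^'m::finite) \<Rightarrow> 'a \<Rightarrow> real" where
  "C_lambda f h x = onorm (Dmap (flambda f h) x)"

definition beta1 :: "('a::euclidean_space \<Rightarrow> real) \<Rightarrow> ('a \<Rightarrow> real^'m::finite) \<Rightarrow> 'a \<Rightarrow> real" where
  "beta1 f h x = sigma1 (Dmap h x) * C_lambda f h x / (2 * (sigma_min (Dmap h x))\<^sup>2)"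

definition t1 :: "('a::euclidean_space \<Rightarrow> real) \<Rightarrow> ('a \<Rightarrow> real^'m::finite) \<Rightarrow> real \<Rightarrow> real \<Rightarrow> real \<Rightarrow> 'a \<Rightarrow> real" where
  "t1 f h \<beta> R Ch x =
     (let G = norm (grad (fletcher f h \<beta>) x); A = Dmap h x in
      min (sqrt (R / (2 * Ch)) * (1 / G))
          (min ((2 * \<beta> * (sigma_min A)\<^sup>2 - sigma1 A * C_lambda f h x) * R / (2 * Ch * G\<^sup>2))
               (1 / (2 * \<beta> * (onorm A)\<^sup>2))))"

end

theory Submission
  imports Defs
begin

lemma pinv_normal_eq:
  fixes B :: "real^'m::finite \<Rightarrow> 'a::euclidean_space" and C :: "'a \<Rightarrow> real^'m"
  assumes lB: "linear B" and lC: "linear C" and P1: "B \<circ> C \<circ> B = B"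
    and P3: "adjoint (B \<circ> C) = B \<circ> C"
  shows "adjoint B (B (C z)) = adjoint B z"
proof -
  have lBC: "linear (B \<circ> C)" using lB lC linear_compose by blast
  have "\<forall>w. adjoint B (B (C z)) \<bullet> w = adjoint B z \<bullet> w"
  proof
    fix w
    have "adjoint B (B (C z)) \<bullet> w = B (C z) \<bullet> B w" by (simp add: adjoint_clauses(2)[OF lB])
    also have "\<dots> = z \<bullet> adjoint (B \<circ> C) (B w)"
      using adjoint_works[OF lBC, of z "B w"] by simp
    also have "\<dots> = z \<bullet> B w" using P1 P3 by (metis comp_apply)
    also have "\<dots> = adjoint B z \<bullet> w" by (simp add: adjoint_clauses(2)[OF lB])
    finally show "adjoint B (B (C z)) \<bullet> w = adjoint B z \<bullet> w" .
  qed
  then show ?thesis by (metis vector_eq_rdot)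
qed

lemma pinv_props:
  fixes B :: "real^'m::finite \<Rightarrow> 'a::euclidean_space"
  assumes lB: "linear B" and iB: "inj B"
  shows "adjoint B (B (mp_pinv B z)) = adjoint B z"
proof -
  let ?P = "\<lambda>C. linear C \<and> B \<circ> C \<circ> B = B \<and> C \<circ> B \<circ> C = C \<and>
       adjoint (B \<circ> C) = B \<circ> C \<and> adjoint (C \<circ> B) = C \<circ> B"
  define G where "G = adjoint B \<circ> B"
  have lBa: "linear (adjoint B)" by (rule adjoint_linear[OF lB])
  have lG: "linear G" unfolding G_def using lB lBa linear_compose by blast
  have Gq: "y \<bullet> G x = B y \<bullet> B x" for x y
    unfolding G_def using adjoint_works[OF lB] by simp
  have iG: "inj G"
  proof -
    have "x = 0" if "G x = 0" for x
    proof -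
    have "B x \<bullet> B x = 0" using Gq[of x x] that by simp
    then have "B x = 0" by simp
    then show "x = 0" using iB lB by (metis linear_0 injD)
    qed
    then show ?thesis using lG by (metis linear_injective_0)
  qed
  obtain Gi where lGi: "linear Gi" and Gi1: "\<forall>x. Gi (G x) = x" and Gi2: "\<forall>x. G (Gi x) = x"
    using linear_injective_isomorphism[OF lG iG] by auto
  define C0 where "C0 = Gi \<circ> adjoint B"
  have lC0: "linear C0" unfolding C0_def using lGi lBa linear_compose by blast
  have C0B: "C0 \<circ> B = id" unfolding C0_def using Gi1 by (auto simp: G_def)
  have ex: "?P C0"
  proof (intro conjI)
    show "linear C0" by fact
    show "B \<circ> C0 \<circ> B = B" using C0B by (metis comp_assoc comp_id)
    show "C0 \<circ> B \<circ> C0 = C0" using C0B by simp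
    show "adjoint (C0 \<circ> B) = C0 \<circ> B" unfolding C0B
      by (rule adjoint_unique) simp
    show "adjoint (B \<circ> C0) = B \<circ> C0"
    proof (rule adjoint_unique, intro allI)
      fix x y
      have sym: "Gi a \<bullet> b = B (Gi a) \<bullet> B (Gi b)" for a b
        using Gq[of "Gi b" "Gi a"] Gq[of "Gi a" "Gi b"] Gi2 by (simp add: inner_commute)
      have "(B \<circ> C0) x \<bullet> y = Gi (adjoint B x) \<bullet> adjoint B y"
        unfolding C0_def by (simp add: adjoint_works[OF lB])
      also have "\<dots> = adjoint B x \<bullet> Gi (adjoint B y)"
        using sym[of "adjoint B x" "adjoint B y"] sym[of "adjoint B y" "adjoint B x"]
        by (simp add: inner_commute)
      also have "\<dots> = x \<bullet> (B \<circ> C0) y"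
        unfolding C0_def by (simp add: adjoint_clauses(2)[OF lB] inner_commute)
      finally show "(B \<circ> C0) x \<bullet> y = x \<bullet> (B \<circ> C0) y" .
    qed
  qed
  have un: "C1 = C2" if "?P C1" "?P C2" for C1 C2
  proof
    fix z
    have "G (C1 z) = G (C2 z)"
      using pinv_normal_eq[OF lB, of C1 z] pinv_normal_eq[OF lB, of C2 z] that
      by (simp add: G_def)
    then show "C1 z = C2 z" using iG by (meson injD)
  qed
  have "?P (mp_pinv B)" unfolding mp_pinv_def
    by (rule theI[of ?P C0]) (use ex un in blast)+
  then show ?thesis using pinv_normal_eq[OF lB] by blast
qed

lemma smooth_D:
  assumes "smooth f"
  obtains F where "\<And>y. (f has_derivative (\<lambda>v. F (1::nat) y [v])) (at y)"
    and "\<And>y v. (\<lambda>z. F 1 z [v]) differentiable (at y)"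
proof -
  obtain F where F0: "\<forall>x. F 0 x [] = f x" and FD: "\<forall>k x vs. length vs = k \<longrightarrow>
          ((\<lambda>y. F k y vs) has_derivative (\<lambda>v. F (Suc k) x (v # vs))) (at x)"
    using assms unfolding smooth_def by blast
  have "f = (\<lambda>y. F 0 y [])" using F0 by auto
  then have 1: "(f has_derivative (\<lambda>v. F 1 y [v])) (at y)" for y
    using FD[rule_format, of "[]" 0 y] by simp
  have 2: "(\<lambda>z. F 1 z [v]) differentiable (at y)" for y v
    using FD[rule_format, of "[v]" 1 y] unfolding differentiable_def by auto
  show ?thesis using that 1 2 by blast
qed

lemma grad_char:
  fixes g :: "'a::euclidean_space \<Rightarrow> real"
  assumes "(g has_derivative D) (at x)"
  shows "v \<bullet> grad g x = D v"
proof -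
  have lD: "linear D" using assms has_derivative_linear by blast
  define u where "u = (\<Sum>k\<in>Basis. D k *\<^sub>R k)"
  have Du: "D w = w \<bullet> u" for w
  proof -
    have "D w = D (\<Sum>k\<in>Basis. (w \<bullet> k) *\<^sub>R k)" by (simp add: euclidean_representation)
    also have "\<dots> = (\<Sum>k\<in>Basis. (w \<bullet> k) * D k)"
      by (simp add: linear_sum[OF lD] linear_cmul[OF lD])
    also have "\<dots> = w \<bullet> u" unfolding u_def by (simp add: inner_sum_right mult.commute)
    finally show ?thesis .
  qed
  have "D = (\<lambda>h. h \<bullet> u)" using Du by auto
  then have "GDERIV g x :> u" unfolding gderiv_def using assms by simp
  then have "GDERIV g x :> grad g x" unfolding grad_def by (rule someI)
  then have "(\<lambda>h. h \<bullet> grad g x) = D" unfolding gderiv_def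
    using assms has_derivative_unique by blast
  then show ?thesis by metis
qed

lemma differentiable_prod_at:
  fixes f :: "'i \<Rightarrow> 'a::real_normed_vector \<Rightarrow> real"
  assumes "\<And>i. i \<in> I \<Longrightarrow> f i differentiable (at x)"
  shows "(\<lambda>x. \<Prod>i\<in>I. f i x) differentiable (at x)"
proof -
  from assms obtain D where "\<And>i. i \<in> I \<Longrightarrow> (f i has_derivative D i) (at x)"
    unfolding differentiable_def by metis
  then show ?thesis unfolding differentiable_def using has_derivative_prod by blast
qed

lemma det_differentiable:
  fixes M :: "'a::real_normed_vector \<Rightarrow> real^'n::finite^'n"
  assumes "\<And>i j. (\<lambda>y. M y $ i $ j) differentiable (at x)"
  shows "(\<lambda>y. det (M y)) differentiable (at x)"
  unfolding det_def
  by (intro differentiable_sum differentiable_mult differentiable_const differentiable_prod_at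
      ballI assms finite_permutations finite) 

lemma vec_differentiable:
  fixes \<phi> :: "'n::finite \<Rightarrow> 'a::real_normed_vector \<Rightarrow> real"
  assumes "\<And>k. \<phi> k differentiable (at x)"
  shows "(\<lambda>y. (\<chi> k. \<phi> k y)) differentiable (at x)"
proof -
  have "(\<lambda>y. (\<chi> k. \<phi> k y)) = (\<lambda>y. \<Sum>k\<in>UNIV. \<phi> k y *\<^sub>R axis k 1)"
    by (rule ext, subst basis_expansion[symmetric]) (simp add: scalar_mult_eq_scaleR)
  moreover have "(\<lambda>y. \<Sum>k\<in>UNIV. \<phi> k y *\<^sub>R axis k (1::real)) differentiable (at x)"
    by (intro differentiable_sum differentiable_scaleR assms differentiable_const ballI finite)
  ultimately show ?thesis by simp
qed

lemma comp_differentiable: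
  fixes g :: "'a::real_normed_vector \<Rightarrow> real^'n::finite"
  assumes "g differentiable (at x)"
  shows "(\<lambda>y. g y $ i) differentiable (at x)"
proof -
  have "(\<lambda>v. v $ i) differentiable (at (g x))"
    using bounded_linear_vec_nth bounded_linear_imp_differentiable by blast
  then show ?thesis using differentiable_compose[OF _ assms] by blast
qed

lemma adj_norm_le:
  fixes A :: "'a::euclidean_space \<Rightarrow> real^'m::finite"
  assumes bA: "bounded_linear A"
  shows "norm (adjoint A z) \<le> onorm A * norm z"
proof -
  have lA: "linear A" using bA bounded_linear.linear by blast
  have "(norm (adjoint A z))\<^sup>2 = A (adjoint A z) \<bullet> z"
    by (simp add: power2_norm_eq_inner adjoint_works[OF lA])
  also have "\<dots> \<le> norm (A (adjoint A z)) * norm z" by (rule norm_cauchy_schwarz)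
  also have "\<dots> \<le> onorm A * norm (adjoint A z) * norm z"
    by (intro mult_right_mono onorm[OF bA]) simp
  finally have *: "(norm (adjoint A z))\<^sup>2 \<le> onorm A * norm z * norm (adjoint A z)"
    by (simp add: algebra_simps)
  show ?thesis
  proof (cases "norm (adjoint A z) = 0")
    case True then show ?thesis using onorm_pos_le[OF bA] by simp
  next
    case False
    then have "norm (adjoint A z) > 0" by simp
    with * show ?thesis by (simp add: power2_eq_square)
  qed
qed

lemma sigma_min_nonneg: "0 \<le> sigma_min (A :: 'a::real_inner \<Rightarrow> real^'m::finite)"
proof -
  obtain i :: 'm where True by simp
  have "norm (axis i (1::real)) = 1" by simp
  then have ne: "{norm (adjoint A y) | y. norm y = 1} \<noteq> {}" by blast
  show ?thesis unfolding sigma_min_def by (rule cInf_greatest[OF ne]) auto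
qed

lemma sigma_min_le:
  fixes A :: "'a::euclidean_space \<Rightarrow> real^'m::finite"
  assumes lA: "linear A"
  shows "sigma_min A * norm z \<le> norm (adjoint A z)"
proof (cases "z = 0")
  case True then show ?thesis by simp
next
  case False
  let ?y = "z /\<^sub>R norm z"
  have "norm ?y = 1" using False by simp
  then have "sigma_min A \<le> norm (adjoint A ?y)" unfolding sigma_min_def
    by (intro cInf_lower) (auto intro: bdd_belowI[where m=0])
  also have "adjoint A ?y = adjoint A z /\<^sub>R norm z"
    using linear_cmul[OF adjoint_linear[OF lA]] by simp
  finally show ?thesis using False by (simp add: field_simps)
qed

lemma sigma_min_le_onorm:
  fixes A :: "'a::euclidean_space \<Rightarrow> real^'m::finite"
  assumes bA: "bounded_linear A"
  shows "sigma_min A \<le> onorm A"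
proof -
  obtain i :: 'm where True by simp
  have "sigma_min A * norm (axis i (1::real)) \<le> norm (adjoint A (axis i 1))"
    using sigma_min_le bA bounded_linear.linear by blast
  also have "\<dots> \<le> onorm A * norm (axis i (1::real))" by (rule adj_norm_le[OF bA])
  finally show ?thesis by simp
qed

lemma quad_disc:
  fixes a b c :: real
  assumes "\<And>r. 0 \<le> a + 2 * r * b + r\<^sup>2 * c" and "0 \<le> c"
  shows "b\<^sup>2 \<le> a * c"
proof (cases "c = 0")
  case True
  have "b = 0"
  proof (rule ccontr)
    assume "b \<noteq> 0"
    have "0 \<le> a + 2 * (-(a+1)/(2*b)) * b" using assms(1)[of "-(a+1)/(2*b)"] True by simp
    also have "\<dots> = -1" using \<open>b \<noteq> 0\<close> by (simp add: field_simps)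
    finally show False by simp
  qed
  then show ?thesis using True by simp
next
  case False
  then have c: "c > 0" using assms(2) by simp
  have "0 \<le> a + 2 * (-b/c) * b + (-b/c)\<^sup>2 * c" by (rule assms(1))
  also have "\<dots> = a - b\<^sup>2 / c" using c by (simp add: field_simps power2_eq_square)
  finally show ?thesis using c by (simp add: field_simps)
qed

lemma contraction:
  fixes A :: "'a::euclidean_space \<Rightarrow> real^'m::finite"
  assumes bA: "bounded_linear A" and s0: "0 \<le> s" and s1: "s * (onorm A)\<^sup>2 \<le> 1"
  shows "norm (h - s *\<^sub>R A (adjoint A h)) \<le> (1 - s * (sigma_min A)\<^sup>2) * norm h"
proof -
  have lA: "linear A" using bA bounded_linear.linear by blast
  have lAa: "linear (adjoint A)" by (rule adjoint_linear[OF lA])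
  define N where "N v = v - s *\<^sub>R A (adjoint A v)" for v
  define Bf where "Bf u v = u \<bullet> v - s * (adjoint A u \<bullet> adjoint A v)" for u v
  define c where "c = 1 - s * (sigma_min A)\<^sup>2"
  have BN: "u \<bullet> N v = Bf u v" for u v
    unfolding N_def Bf_def by (simp add: inner_diff_right adjoint_clauses(2)[OF lA])
  have Bsym: "Bf u v = Bf v u" for u v unfolding Bf_def by (simp add: inner_commute)
  have Qup: "Bf v v \<le> c * (norm v)\<^sup>2" for v
  proof -
    have "sigma_min A * norm v \<le> norm (adjoint A v)" by (rule sigma_min_le[OF lA])
    then have "(sigma_min A * norm v)\<^sup>2 \<le> (norm (adjoint A v))\<^sup>2"
      using sigma_min_nonneg[of A] by (intro power_mono) auto
    then have "s * (sigma_min A * norm v)\<^sup>2 \<le> s * (norm (adjoint A v))\<^sup>2"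
      using s0 by (rule mult_left_mono)
    then show ?thesis unfolding Bf_def c_def
      by (simp add: power2_norm_eq_inner[symmetric] algebra_simps power_mult_distrib)
  qed
  have Qlo: "0 \<le> Bf v v" for v
  proof -
    have "norm (adjoint A v) \<le> onorm A * norm v" by (rule adj_norm_le[OF bA])
    then have "(norm (adjoint A v))\<^sup>2 \<le> (onorm A * norm v)\<^sup>2" by (intro power_mono) auto
    then have "s * (norm (adjoint A v))\<^sup>2 \<le> s * (onorm A * norm v)\<^sup>2"
      using s0 by (rule mult_left_mono)
    also have "\<dots> = (s * (onorm A)\<^sup>2) * (norm v)\<^sup>2" by (simp add: power_mult_distrib)
    also have "\<dots> \<le> (norm v)\<^sup>2" using s1 s0 by (intro mult_left_le_one_le) auto
    finally show ?thesis unfolding Bf_def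
      by (simp add: power2_norm_eq_inner[symmetric])
  qed
  have c0: "0 \<le> c"
  proof -
    obtain i :: 'm where True by simp
    have "Bf (axis i 1) (axis i 1) \<le> c" using Qup[of "axis i 1"] by simp
    then show ?thesis using Qlo[of "axis i 1"] by linarith
  qed
  have CS: "(Bf u v)\<^sup>2 \<le> Bf u u * Bf v v" for u v
  proof (rule quad_disc)
    show "0 \<le> Bf v v" by (rule Qlo)
    fix r :: real
    have "Bf (u + r *\<^sub>R v) (u + r *\<^sub>R v) = Bf u u + 2 * r * Bf u v + r\<^sup>2 * Bf v v"
      unfolding Bf_def
      by (simp add: linear_add[OF lAa] linear_cmul[OF lAa] inner_add_left inner_add_right
          inner_commute algebra_simps power2_eq_square)
    then show "0 \<le> Bf u u + 2 * r * Bf u v + r\<^sup>2 * Bf v v" using Qlo by metis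
  qed
  let ?w = "N h"
  have "(norm ?w)\<^sup>2 = Bf h ?w"
    using BN[of ?w h] Bsym[of ?w h] BN[of h ?w]
    by (simp add: power2_norm_eq_inner)
  then have "((norm ?w)\<^sup>2)\<^sup>2 \<le> Bf h h * Bf ?w ?w" using CS[of h ?w] by simp
  also have "\<dots> \<le> (c * (norm h)\<^sup>2) * (c * (norm ?w)\<^sup>2)"
    by (intro mult_mono Qup Qlo) (use c0 in auto)
  finally have *: "((norm ?w)\<^sup>2)\<^sup>2 \<le> (c * norm h)\<^sup>2 * (norm ?w)\<^sup>2"
    by (simp add: power_mult_distrib algebra_simps power2_eq_square)
  have "norm ?w \<le> c * norm h"
  proof (cases "norm ?w = 0")
    case True then show ?thesis using c0 by simp
  next
    case False
    then have "(norm ?w)\<^sup>2 > 0" by simp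
    have gen: "p \<le> q" if "p\<^sup>2 \<le> q * p" "p > 0" for p q :: real
      using that by (simp add: power2_eq_square)
    have "(norm ?w)\<^sup>2 \<le> (c * norm h)\<^sup>2"
      by (rule gen) (use * \<open>(norm ?w)\<^sup>2 > 0\<close> in auto)
    then show ?thesis using c0 by (meson norm_ge_zero power2_le_imp_le mult_nonneg_nonneg)
  qed
  then show ?thesis unfolding N_def c_def .
qed

lemma lin_expand:
  fixes A :: "'a::euclidean_space \<Rightarrow> real^'m::finite"
  assumes lA: "linear A"
  shows "A g = (\<chi> i. \<Sum>k\<in>Basis. (A k) $ i * (g \<bullet> k))"
proof -
  have "A g = A (\<Sum>k\<in>Basis. (g \<bullet> k) *\<^sub>R k)" by (simp add: euclidean_representation)
  also have "\<dots> = (\<Sum>k\<in>Basis. (g \<bullet> k) *\<^sub>R A k)"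
    by (simp add: linear_sum[OF lA] linear_cmul[OF lA])
  finally show ?thesis by (simp add: vec_eq_iff sum_component mult.commute)
qed

lemma gram_eq:
  fixes A :: "'a::euclidean_space \<Rightarrow> real^'m::finite"
  assumes lA: "linear A"
  shows "(\<chi> i j. \<Sum>k\<in>Basis. (A k) $ i * (A k) $ j) *v \<mu> = A (adjoint A \<mu>)"
proof -
  have "A (adjoint A \<mu>) = (\<chi> i. \<Sum>k\<in>Basis. (A k) $ i * (adjoint A \<mu> \<bullet> k))"
    by (rule lin_expand[OF lA])
  also have "\<dots> = (\<chi> i. \<Sum>k\<in>Basis. (A k) $ i * (\<Sum>j\<in>UNIV. (A k) $ j * \<mu> $ j))"
    by (simp add: adjoint_clauses(2)[OF lA] inner_vec_def mult.commute)
  also have "\<dots> = (\<chi> i j. \<Sum>k\<in>Basis. (A k) $ i * (A k) $ j) *v \<mu>"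
    by (simp add: vec_eq_iff matrix_vector_mult_def sum_distrib_left sum_distrib_right
        mult.assoc) (intro allI sum.swap)
  finally show ?thesis by simp
qed

theorem mainTheorem7:
  fixes f :: "'a::euclidean_space \<Rightarrow> real"
    and h :: "'a \<Rightarrow> real^'m::finite"
    and R \<sigma> Ch \<beta> t :: real and x :: 'a
  assumes smooth_f: "smooth f" and smooth_h: "smooth h"
    and A1: "R > 0" "\<sigma> > 0" "\<forall>y. norm (h y) \<le> R \<longrightarrow> sigma_min (Dmap h y) \<ge> \<sigma>"
    and A3: "Ch > 0"
      "\<forall>y v. norm (h y) \<le> R \<longrightarrow> norm (h (y + v) - h y - Dmap h y v) \<le> Ch * (norm v)\<^sup>2"
    and xC: "norm (h x) \<le> R"
    and beta: "\<beta> \<ge> 0" "\<beta> > beta1 f h x"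
    and t: "0 \<le> t" "t \<le> t1 f h \<beta> R Ch x"
  shows "norm (h (x - t *\<^sub>R grad (fletcher f h \<beta>) x)) \<le> R"
proof -
  obtain Fh where Fh1: "\<And>y. (h has_derivative (\<lambda>v. Fh (1::nat) y [v])) (at y)"
    and Fh2: "\<And>y v. (\<lambda>z. Fh 1 z [v]) differentiable (at y)"
    using smooth_D[OF smooth_h] by blast
  obtain Ff where Ff1: "\<And>y. (f has_derivative (\<lambda>v. Ff (1::nat) y [v])) (at y)"
    and Ff2: "\<And>y v. (\<lambda>z. Ff 1 z [v]) differentiable (at y)"
    using smooth_D[OF smooth_f] by blast
  have DmapE: "Dmap h y = (\<lambda>v. Fh 1 y [v])" for y
    unfolding Dmap_def using frechet_derivative_at[OF Fh1] by simp
  have hD: "(h has_derivative Dmap h y) (at y)" for y using Fh1 DmapE by simp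
  have bA: "bounded_linear (Dmap h y)" for y using hD has_derivative_bounded_linear by blast
  have lA: "linear (Dmap h y)" for y using bA bounded_linear.linear by blast
  have gf: "v \<bullet> grad f y = Ff 1 y [v]" for y v by (rule grad_char[OF Ff1])
  define Gm where "Gm y = (\<chi> i j. \<Sum>k\<in>Basis. (Fh 1 y [k]) $ i * (Fh 1 y [k]) $ j)" for y
  define bv where "bv y = (\<chi> i. \<Sum>k\<in>Basis. (Fh 1 y [k]) $ i * Ff 1 y [k])" for y
  have Gm_eq: "Gm y *v \<mu> = Dmap h y (adjoint (Dmap h y) \<mu>)" for y \<mu>
    using gram_eq[OF lA[of y], of \<mu>] unfolding Gm_def DmapE by simp
  have bv_eq: "bv y = Dmap h y (grad f y)" for y
    using lin_expand[OF lA[of y], of "grad f y"] unfolding bv_def DmapE by (simp add: gf inner_commute[of "grad f y"])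
  have inj_of_det: "inj (adjoint (Dmap h y))" if "det (Gm y) \<noteq> 0" for y
  proof -
    have "\<exists>B. B ** Gm y = mat 1" using that invertible_det_nz invertible_left_inverse by blast
    then have k: "\<forall>z. Gm y *v z = 0 \<longrightarrow> z = 0" using matrix_left_invertible_ker by blast
    have "z = 0" if "adjoint (Dmap h y) z = 0" for z
      using k Gm_eq[of y z] that lA[of y] by (simp add: linear_0)
    then show ?thesis using adjoint_linear[OF lA[of y]] by (metis linear_injective_0)
  qed
  define A where "A = Dmap h x"
  define sm where "sm = sigma_min A"
  have sm_ge: "sm \<ge> \<sigma>" using A1(3) xC unfolding sm_def A_def by blast
  have detx: "det (Gm x) \<noteq> 0"
  proof -
    have "z = 0" if "Gm x *v z = 0" for z
    proof -
      have "adjoint A z \<bullet> adjoint A z = z \<bullet> (Gm x *v z)"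
        using Gm_eq[of x z] adjoint_works[OF lA[of x]] unfolding A_def
        by (simp add: adjoint_clauses(2)[OF lA[of x]] inner_commute)
      then have "adjoint A z = 0" using that by simp
      then have "sm * norm z \<le> 0" using sigma_min_le[OF lA[of x]] unfolding sm_def A_def
        by (metis norm_zero)
      moreover have "sm > 0" using sm_ge A1(2) by simp
      ultimately have "norm z \<le> 0" by (simp add: mult_le_0_iff)
      then show ?thesis by simp
    qed
    then show ?thesis
      using matrix_left_invertible_ker invertible_left_inverse invertible_det_nz by blast
  qed
  define Mk where "Mk k y = (\<chi> i j. if j = k then bv y $ i else Gm y $ i $ j)" for k y
  define \<Lambda> where "\<Lambda> y = (\<chi> k. det (Mk k y) / det (Gm y))" for y
  have normal_y: "Gm y *v flambda f h y = bv y" if "det (Gm y) \<noteq> 0" for y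
  proof -
    have lAa: "linear (adjoint (Dmap h y))" by (rule adjoint_linear[OF lA])
    have "adjoint (adjoint (Dmap h y)) (adjoint (Dmap h y) (flambda f h y))
        = adjoint (adjoint (Dmap h y)) (grad f y)"
      unfolding flambda_def by (rule pinv_props[OF lAa inj_of_det[OF that]])
    then show ?thesis
      by (simp add: adjoint_adjoint[OF lA] Gm_eq bv_eq)
  qed
  have lam_eq: "flambda f h y = \<Lambda> y" if "det (Gm y) \<noteq> 0" for y
    using cramer[OF that] normal_y[OF that] unfolding \<Lambda>_def Mk_def by blast
  have dFh: "(\<lambda>y. Fh 1 y [k] $ i) differentiable (at z)" for k i z
    by (rule comp_differentiable[OF Fh2])
  have dGm: "(\<lambda>y. Gm y $ i $ j) differentiable (at z)" for i j z
    unfolding Gm_def vec_lambda_beta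
    by (intro differentiable_sum ballI finite_Basis differentiable_mult dFh)
  have dbv: "(\<lambda>y. bv y $ i) differentiable (at z)" for i z
    unfolding bv_def vec_lambda_beta
    by (intro differentiable_sum ballI finite_Basis differentiable_mult dFh Ff2)
  have dMk: "(\<lambda>y. Mk k y $ i $ j) differentiable (at z)" for k i j z
    unfolding Mk_def by (cases "j = k") (simp_all add: dGm dbv)
  have ddet: "(\<lambda>y. det (Gm y)) differentiable (at z)" for z
    by (rule det_differentiable[OF dGm])
  have ddetk: "(\<lambda>y. det (Mk k y)) differentiable (at z)" for k z
    by (rule det_differentiable[OF dMk])
  have dLam: "\<Lambda> differentiable (at x)"
    unfolding \<Lambda>_def by (intro vec_differentiable differentiable_divide ddet ddetk detx)
  have openS: "open {y. det (Gm y) \<noteq> 0}"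
  proof -
    have "continuous_on UNIV (\<lambda>y. det (Gm y))"
      using ddet differentiable_imp_continuous_on differentiable_on_def
      by (metis differentiable_at_withinI)
    then show ?thesis using open_Collect_neq[of "\<lambda>y. det (Gm y)" "\<lambda>y. 0"] by simp
  qed
  obtain L0 where L0: "(\<Lambda> has_derivative L0) (at x)" using dLam differentiable_def by blast
  have lamD0: "(flambda f h has_derivative L0) (at x)"
    by (rule has_derivative_transform_within_open[OF L0 openS]) (use detx lam_eq in auto)
  define L where "L = Dmap (flambda f h) x"
  have lamD: "(flambda f h has_derivative L) (at x)"
    unfolding L_def Dmap_def using lamD0 frechet_derivative_at by metis
  have bL: "bounded_linear L" using lamD has_derivative_bounded_linear by blast
  define lx where "lx = flambda f h x"
  define hx where "hx = h x"
  define D where "D v = Ff 1 x [v] - (hx \<bullet> L v + A v \<bullet> lx) + \<beta> * (hx \<bullet> A v + A v \<bullet> hx)" for v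
  have gfun: "fletcher f h \<beta> = (\<lambda>y. f y - h y \<bullet> flambda f h y + \<beta> * (h y \<bullet> h y))"
    unfolding fletcher_def by (simp add: power2_norm_eq_inner)
  have gD: "(fletcher f h \<beta> has_derivative D) (at x)"
    unfolding gfun D_def A_def lx_def hx_def
    by (intro has_derivative_diff has_derivative_add has_derivative_inner has_derivative_mult_right
        Ff1 hD lamD)
  define u where "u = grad (fletcher f h \<beta>) x"
  have uD: "v \<bullet> u = D v" for v unfolding u_def by (rule grad_char[OF gD])
  have lAx: "linear A" unfolding A_def by (rule lA)
  have bAx: "bounded_linear A" unfolding A_def by (rule bA)
  have normal: "A (adjoint A lx) = A (grad f x)"
    using Gm_eq[of x lx] bv_eq[of x] normal_y[OF detx]
    unfolding A_def lx_def by simp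
  define w where "w = A u - (2 * \<beta>) *\<^sub>R A (adjoint A hx)"
  have wz: "w \<bullet> z = - (hx \<bullet> L (adjoint A z))" for z
  proof -
    have "A u \<bullet> z = adjoint A z \<bullet> u" by (simp add: adjoint_works[OF lAx] inner_commute)
    also have "\<dots> = D (adjoint A z)" by (rule uD)
    also have "\<dots> = - (hx \<bullet> L (adjoint A z)) + (2 * \<beta>) * (A (adjoint A hx) \<bullet> z)"
    proof -
      have 1: "Ff 1 x [adjoint A z] = z \<bullet> A (grad f x)"
        using gf[of "adjoint A z" x] by (simp add: adjoint_clauses(2)[OF lAx])
      have 2: "A (adjoint A z) \<bullet> lx = z \<bullet> A (grad f x)"
        using normal adjoint_clauses[OF lAx] by (metis inner_commute)
      have 3: "A (adjoint A z) \<bullet> hx = A (adjoint A hx) \<bullet> z"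
        using adjoint_clauses[OF lAx] by (metis inner_commute)
      show ?thesis unfolding D_def using 1 2 3 by (simp add: inner_commute algebra_simps)
    qed
    finally show ?thesis unfolding w_def by (simp add: inner_diff_left)
  qed
  define Cl where "Cl = C_lambda f h x"
  define s1 where "s1 = sigma1 A"
  have Cl_eq: "Cl = onorm L" unfolding Cl_def C_lambda_def L_def ..
  have s1_eq: "s1 = onorm A" unfolding s1_def sigma1_def ..
  have Cl0: "0 \<le> Cl" using Cl_eq onorm_pos_le[OF bL] by simp
  have s10: "0 \<le> s1" using s1_eq onorm_pos_le[OF bAx] by simp
  have wnorm: "norm w \<le> Cl * s1 * norm hx"
  proof -
    have "(norm w)\<^sup>2 = - (hx \<bullet> L (adjoint A w))" using wz[of w] by (simp add: power2_norm_eq_inner)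
    also have "\<dots> \<le> norm hx * norm (L (adjoint A w))"
      using Cauchy_Schwarz_ineq2[of hx "L (adjoint A w)"] by (simp add: abs_le_iff)
    also have "\<dots> \<le> norm hx * (Cl * norm (adjoint A w))"
      using onorm[OF bL] Cl_eq by (simp add: mult_left_mono)
    also have "\<dots> \<le> norm hx * (Cl * (s1 * norm w))"
      using adj_norm_le[OF bAx, of w] s1_eq Cl0 by (simp add: mult_left_mono)
    finally have *: "(norm w)\<^sup>2 \<le> (Cl * s1 * norm hx) * norm w" by (simp add: algebra_simps)
    show ?thesis
    proof (cases "w = 0")
      case True then show ?thesis using Cl0 s10 by simp
    next
      case False then have "norm w > 0" by simp
      with * show ?thesis by (simp add: power2_eq_square)
    qed
  qed
  have smpos: "sm > 0" using sm_ge A1(2) by simp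
  have sm_s1: "sm \<le> s1" using sigma_min_le_onorm[OF bAx] s1_eq sm_def by simp
  have b1: "beta1 f h x = s1 * Cl / (2 * sm\<^sup>2)"
    unfolding beta1_def s1_def Cl_def sm_def A_def ..
  have "beta1 f h x \<ge> 0" unfolding b1 using s10 Cl0 by simp
  then have bpos: "\<beta> > 0" using beta(2) by linarith
  define \<delta> where "\<delta> = 2 * \<beta> * sm\<^sup>2 - s1 * Cl"
  have dpos: "\<delta> > 0" using beta(2) b1 smpos unfolding \<delta>_def by (simp add: field_simps)
  define G where "G = norm u"
  have tt: "t \<le> \<delta> * R / (2 * Ch * G\<^sup>2)" "t \<le> 1 / (2 * \<beta> * s1\<^sup>2)"
    using t(2) unfolding t1_def Let_def \<delta>_def G_def u_def sm_def s1_def Cl_def A_def sigma1_def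
    by auto
  have s1pos: "s1 > 0" using smpos sm_s1 by simp
  have tb: "(2 * \<beta> * t) * s1\<^sup>2 \<le> 1" using tt(2) bpos s1pos by (simp add: field_simps)
  have tG: "Ch * t\<^sup>2 * G\<^sup>2 \<le> t * (\<delta> * R / 2)"
  proof (cases "G = 0")
    case True then show ?thesis using t(1) dpos A1(1) by simp
  next
    case False
    then have "t * (Ch * t * G\<^sup>2) \<le> t * (\<delta> * R / 2)"
      using tt(1) A3(1) t(1) by (intro mult_left_mono) (auto simp: field_simps)
    then show ?thesis by (simp add: power2_eq_square algebra_simps)
  qed
  have Nb: "norm (hx - (2 * \<beta> * t) *\<^sub>R A (adjoint A hx)) \<le> (1 - (2 * \<beta> * t) * sm\<^sup>2) * norm hx"
    unfolding sm_def using contraction[OF bAx, of "2 * \<beta> * t" hx] tb s1_eq bpos t(1) by simp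
  define v where "v = - (t *\<^sub>R u)"
  have E: "norm (h (x + v) - hx - A v) \<le> Ch * (norm v)\<^sup>2"
    using A3(2) xC unfolding hx_def A_def by blast
  have Av: "A v = - t *\<^sub>R w - (2 * \<beta> * t) *\<^sub>R A (adjoint A hx)"
    unfolding v_def w_def using linear_cmul[OF lAx] linear_neg[OF lAx]
    by (simp add: algebra_simps)
  have split: "h (x + v) = (hx - (2 * \<beta> * t) *\<^sub>R A (adjoint A hx)) - t *\<^sub>R w + (h (x + v) - hx - A v)"
    unfolding Av by (simp add: algebra_simps)
  have "norm (h (x + v)) \<le> norm (hx - (2 * \<beta> * t) *\<^sub>R A (adjoint A hx)) + norm (t *\<^sub>R w)
       + norm (h (x + v) - hx - A v)"
    by (subst split) (rule order_trans[OF norm_triangle_ineq add_right_mono[OF norm_triangle_ineq4]])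
  also have "\<dots> \<le> (1 - (2 * \<beta> * t) * sm\<^sup>2) * norm hx + t * (Cl * s1 * norm hx) + Ch * t\<^sup>2 * G\<^sup>2"
  proof (intro add_mono)
    show "norm (t *\<^sub>R w) \<le> t * (Cl * s1 * norm hx)" using wnorm t(1) by (simp add: mult_left_mono)
    show "norm (h (x + v) - hx - A v) \<le> Ch * t\<^sup>2 * G\<^sup>2"
      using E t(1) by (simp add: v_def G_def power_mult_distrib)
  qed (use Nb in simp)
  also have "\<dots> = (1 - t * \<delta>) * norm hx + Ch * t\<^sup>2 * G\<^sup>2" unfolding \<delta>_def by (simp add: algebra_simps)
  also have "\<dots> \<le> (1 - t * \<delta>) * R + t * (\<delta> * R / 2)"
  proof (intro add_mono tG mult_left_mono)
    show "norm hx \<le> R" using xC hx_def by simp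
    have "t * \<delta> \<le> (2 * \<beta> * t) * sm\<^sup>2" unfolding \<delta>_def using Cl0 s10 t(1)
      by (simp add: algebra_simps)
    also have "\<dots> \<le> (2 * \<beta> * t) * s1\<^sup>2" using sm_s1 smpos bpos t(1)
      by (intro mult_left_mono power_mono) auto
    finally show "0 \<le> 1 - t * \<delta>" using tb by simp
  qed
  also have "\<dots> \<le> R" using t(1) dpos A1(1) by (simp add: algebra_simps)
  finally show ?thesis unfolding v_def u_def hx_def by simp
qed

end
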